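(* Let $1\le b<\frac{n}{2}-1$ and let $T$ be a tree attaining the maximum value of $M_2$ over $\mathcal{CT}^*_{n,b}$. Then $T$ has at least one vertex of degree $4$, and the subgraph of $T$ induced by the vertices of degree $4$ is a tree.
   Context: A chemical tree is a tree with maximum degree at most $4$. A branching vertex is a vertex of degree greater than $2$. $\mathcal{CT}^*_{n,b}$ is the class of all $n$-vertex chemical trees with exactly $b$ branching vertices. $M_2(G)=\sum_{uv\in E(G)}d_ud_v$, where $d_v$ is the degree of $v$. *)

theory Defs
  imports Complex_Main
begin

definition simple_graph :: "'a set \<Rightarrow> 'a set set \<Rightarrow> bool" where
  "simple_graph V E \<longleftrightarrow> finite V \<and> (\<forall>e\<in>E. e \<subseteq> V \<and> card e = 2)"

definition adj_rel :: "'a set set \<Rightarrow> ('a \<times> 'a) set" where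
  "adj_rel E = {(u, v). {u, v} \<in> E}"

definition connected_graph :: "'a set \<Rightarrow> 'a set set \<Rightarrow> bool" where
  "connected_graph V E \<longleftrightarrow> (\<forall>u\<in>V. \<forall>v\<in>V. (u, v) \<in> (adj_rel E)\<^sup>*)"

definition is_tree :: "'a set \<Rightarrow> 'a set set \<Rightarrow> bool" where
  "is_tree V E \<longleftrightarrow> simple_graph V E \<and> V \<noteq> {} \<and> connected_graph V E
                   \<and> card E = card V - 1"

definition deg :: "'a set set \<Rightarrow> 'a \<Rightarrow> nat" where
  "deg E v = card {e\<in>E. v \<in> e}"

definition chemical_tree :: "'a set \<Rightarrow> 'a set set \<Rightarrow> bool" where
  "chemical_tree V E \<longleftrightarrow> is_tree V E \<and> (\<forall>v\<in>V. deg E v \<le> 4)"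

definition branching_vertices :: "'a set \<Rightarrow> 'a set set \<Rightarrow> 'a set" where
  "branching_vertices V E = {v\<in>V. deg E v > 2}"

definition CT_star :: "nat \<Rightarrow> nat \<Rightarrow> ('a set \<times> 'a set set) set" where
  "CT_star n b = {(V, E). chemical_tree V E \<and> card V = n \<and> card (branching_vertices V E) = b}"

definition M2 :: "'a set set \<Rightarrow> nat" where
  "M2 E = (\<Sum>e\<in>E. \<Prod>v\<in>e. deg E v)"

definition induced_edges :: "'a set set \<Rightarrow> 'a set \<Rightarrow> 'a set set" where
  "induced_edges E S = {e\<in>E. e \<subseteq> S}"

end

theory Submission
  imports Defs
begin


lemma adj_iff: "(x,y) \<in> adj_rel E \<longleftrightarrow> {x,y} \<in> E"
  by (simp add: adj_rel_def)

lemma sym_adj: "sym (adj_rel E)"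
  by (auto simp: sym_def adj_rel_def insert_commute)

lemma adj_rtrancl_sym: "(x,y) \<in> (adj_rel E)\<^sup>* \<Longrightarrow> (y,x) \<in> (adj_rel E)\<^sup>*"
  using sym_rtrancl[OF sym_adj[of E]] unfolding sym_def by blast

lemma connected_transfer:
  assumes "connected_graph V E" and "\<And>x y. {x,y} \<in> E \<Longrightarrow> (x,y) \<in> (adj_rel E')\<^sup>*"
  shows "connected_graph V E'"
proof -
  have "adj_rel E \<subseteq> (adj_rel E')\<^sup>*" using assms(2) by (auto simp: adj_rel_def)
  hence "(adj_rel E)\<^sup>* \<subseteq> (adj_rel E')\<^sup>*" by (rule rtrancl_subset_rtrancl)
  thus ?thesis using assms(1) unfolding connected_graph_def by blast
qed

lemma edge_of:
  assumes "simple_graph V E" "e \<in> E"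
  obtains x y where "e = {x,y}" "x \<noteq> y" "x \<in> V" "y \<in> V"
proof -
  from assms have "card e = 2" "e \<subseteq> V" by (auto simp: simple_graph_def)
  then obtain x y where "e = {x,y}" "x \<noteq> y" by (auto simp: card_2_iff)
  thus ?thesis using that \<open>e \<subseteq> V\<close> by auto
qed

lemma finite_E: "simple_graph V E \<Longrightarrow> finite E"
  unfolding simple_graph_def by (meson Pow_iff finite_Pow_iff finite_subset subsetI)

lemma edge_in_V: "simple_graph V E \<Longrightarrow> {x,y} \<in> E \<Longrightarrow> x \<in> V \<and> y \<in> V"
  unfolding simple_graph_def by auto

lemma edge_neq: "simple_graph V E \<Longrightarrow> {x,y} \<in> E \<Longrightarrow> x \<noteq> y"
  unfolding simple_graph_def by fastforce

locale conn =
  fixes V :: "'a set" and E :: "'a set set" and r :: 'a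
  assumes sg: "simple_graph V E" and cn: "connected_graph V E" and rV: "r \<in> V"
begin

definition dist :: "'a \<Rightarrow> nat" where
  "dist x = (LEAST k. (x, r) \<in> adj_rel E ^^ k)"

definition par :: "'a \<Rightarrow> 'a" where
  "par x = (SOME y. {x,y} \<in> E \<and> Suc (dist y) = dist x)"

lemma finE: "finite E" using finite_E[OF sg] .
lemma finV: "finite V" using sg by (simp add: simple_graph_def)

lemma dist_path: "x \<in> V \<Longrightarrow> (x, r) \<in> adj_rel E ^^ dist x"
proof -
  assume "x \<in> V"
  then have "(x,r) \<in> (adj_rel E)\<^sup>*" using cn rV by (auto simp: connected_graph_def)
  then obtain k where "(x,r) \<in> adj_rel E ^^ k" by (auto simp: rtrancl_power)
  thus ?thesis unfolding dist_def by (rule LeastI)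
qed

lemma dist_le: "(x, r) \<in> adj_rel E ^^ k \<Longrightarrow> dist x \<le> k"
  unfolding dist_def by (rule Least_le)

lemma dist_r: "dist r = 0"
  using dist_le[of r 0] by simp

lemma dist0: "x \<in> V \<Longrightarrow> dist x = 0 \<longleftrightarrow> x = r"
  using dist_path[of x] dist_r by auto

lemma par_ex: assumes "x \<in> V" "x \<noteq> r"
  shows "\<exists>y. {x,y} \<in> E \<and> Suc (dist y) = dist x"
proof -
  obtain k where k: "dist x = Suc k" using dist0[OF assms(1)] assms(2) not0_implies_Suc by blast
  with dist_path[OF assms(1)] obtain y where y: "(x,y) \<in> adj_rel E" "(y,r) \<in> adj_rel E ^^ k"
    by (metis relpow_Suc_D2)
  have "y \<in> V" using y(1) edge_in_V[OF sg] by (auto simp: adj_iff)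
  have "dist y \<le> k" using dist_le[OF y(2)] .
  moreover have "dist x \<le> Suc (dist y)"
    using dist_le relpow_Suc_I2[OF y(1) dist_path[OF \<open>y \<in> V\<close>]] by blast
  ultimately have "Suc (dist y) = dist x" using k by simp
  thus ?thesis using y(1) by (auto simp: adj_iff)
qed

lemma par: assumes "x \<in> V" "x \<noteq> r"
  shows "{x, par x} \<in> E" "Suc (dist (par x)) = dist x" "par x \<in> V" "par x \<noteq> x"
proof -
  have "{x, par x} \<in> E \<and> Suc (dist (par x)) = dist x"
    unfolding par_def using someI_ex[OF par_ex[OF assms]] .
  thus "{x, par x} \<in> E" "Suc (dist (par x)) = dist x" by auto
  thus "par x \<in> V" using edge_in_V[OF sg] by blast
  show "par x \<noteq> x" using \<open>Suc (dist (par x)) = dist x\<close> by auto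
qed

lemma par_inj: assumes "x \<in> V" "x \<noteq> r" "y \<in> V" "y \<noteq> r" "{x, par x} = {y, par y}"
  shows "x = y"
proof (rule ccontr)
  assume "x \<noteq> y"
  with assms(5) have "x = par y" "y = par x" by (auto simp: doubleton_eq_iff)
  thus False using par(2)[OF assms(1,2)] par(2)[OF assms(3,4)] by simp
qed

lemma inj_paredge: "inj_on (\<lambda>x. {x, par x}) (V - {r})"
  using par_inj by (auto simp: inj_on_def)

lemma card_lower: "card V - 1 \<le> card E"
proof -
  have "card (V - {r}) \<le> card E"
    using card_inj_on_le[OF inj_paredge _ finE] par(1) by blast
  thus ?thesis using rV finV by simp
qed

end

lemma conn_card: "simple_graph V E \<Longrightarrow> connected_graph V E \<Longrightarrow> V \<noteq> {} \<Longrightarrow> card V - 1 \<le> card E"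
  by (metis conn.card_lower conn.intro equals0I)

lemma tree_count: "simple_graph V E \<Longrightarrow> connected_graph V E \<Longrightarrow> V \<noteq> {} \<Longrightarrow> card E \<le> card V - 1
  \<Longrightarrow> is_tree V E"
  using conn_card[of V E] unfolding is_tree_def by simp




locale tree = conn + assumes cardE: "card E = card V - 1"
begin

lemma E_eq: "E = (\<lambda>x. {x, par x}) ` (V - {r})"
proof -
  have sub: "(\<lambda>x. {x, par x}) ` (V - {r}) \<subseteq> E" using par(1) by blast
  have "card ((\<lambda>x. {x, par x}) ` (V - {r})) = card V - 1"
    using card_image[OF inj_paredge] rV finV by simp
  thus ?thesis using card_subset_eq[OF finE sub] cardE by simp
qed

definition P where "P = {(x, par x) | x. x \<in> V \<and> x \<noteq> r}"

lemma P_step: "(x,y) \<in> P \<Longrightarrow> x \<in> V \<and> x \<noteq> r \<and> y = par x"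
  by (auto simp: P_def)

lemma P_I: "x \<in> V \<Longrightarrow> x \<noteq> r \<Longrightarrow> (x, par x) \<in> P"
  by (auto simp: P_def)

lemma Pstar: "(x,y) \<in> P\<^sup>* \<Longrightarrow> dist y \<le> dist x \<and> (x \<in> V \<longrightarrow> y \<in> V)"
proof (induction rule: rtrancl_induct)
  case base thus ?case by simp
next
  case (step y z) thus ?case using P_step[OF step(2)] par[of y] by force
qed

lemma Pstar_neq: assumes "(x,y) \<in> P\<^sup>*" "x \<noteq> y" shows "dist y < dist x" "x \<noteq> r" "x \<in> V"
proof -
  from assms obtain z where "(x,z) \<in> P" "(z,y) \<in> P\<^sup>*" by (metis converse_rtranclE)
  note z = P_step[OF \<open>(x,z) \<in> P\<close>]
  have "dist y \<le> dist z" using Pstar[OF \<open>(z,y) \<in> P\<^sup>*\<close>] by simp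
  moreover have "Suc (dist z) = dist x" using par(2)[of x] z by simp
  ultimately show "dist y < dist x" by simp
  show "x \<noteq> r" "x \<in> V" using z by auto
qed

lemma to_root: "x \<in> V \<Longrightarrow> (x, r) \<in> P\<^sup>*"
proof (induction "dist x" arbitrary: x rule: less_induct)
  case less
  show ?case
  proof (cases "x = r")
    case True thus ?thesis by simp
  next
    case False
    have "(par x, r) \<in> P\<^sup>*" using less par[OF less(2) False] by (metis lessI)
    thus ?thesis using P_I[OF less(2) False] by (meson converse_rtrancl_into_rtrancl)
  qed
qed

lemma child_ex: assumes "c \<in> V" "c \<noteq> r" "deg E c \<ge> 2"
  shows "\<exists>d. d \<in> V \<and> d \<noteq> r \<and> par d = c"
proof -
  have "{e\<in>E. c \<in> e} \<noteq> {{c, par c}}"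
  proof
    assume "{e\<in>E. c \<in> e} = {{c, par c}}"
    hence "deg E c = 1" by (simp add: deg_def)
    thus False using assms(3) by simp
  qed
  moreover have "{c, par c} \<in> {e\<in>E. c \<in> e}" using par(1)[OF assms(1,2)] by simp
  ultimately obtain e where "e \<in> E" "c \<in> e" "e \<noteq> {c, par c}" by blast
  then obtain x where "x \<in> V" "x \<noteq> r" "e = {x, par x}" using E_eq by blast
  thus ?thesis using \<open>c \<in> e\<close> \<open>e \<noteq> {c, par c}\<close> by auto
qed

end



context tree begin

lemma switch:
  assumes bV: "b \<in> V" "b \<noteq> r" and ab: "par b = a" and dV: "d \<in> V" "d \<noteq> r" and cd: "par d = c"
    and cb: "(c,b) \<in> P\<^sup>*" and cnb: "c \<noteq> b"
  defines "E' \<equiv> (E - {{a,b},{c,d}}) \<union> {{a,c},{b,d}}"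
  shows "is_tree V E'" "\<forall>v. deg E' v = deg E v"
    "M2 E' + deg E a * deg E b + deg E c * deg E d = M2 E + deg E a * deg E c + deg E b * deg E d"
proof -
  have ab1: "Suc (dist a) = dist b" "a \<in> V" using par[OF bV] ab by auto
  have cd1: "Suc (dist c) = dist d" "c \<in> V" using par[OF dV] cd by auto
  have bc: "dist b < dist c" "c \<noteq> r" using Pstar_neq[OF cb cnb] by auto
  have dist: "dist a < dist b" "dist b < dist c" "dist c < dist d" using ab1 cd1 bc by auto
  have ne: "a \<noteq> b" "a \<noteq> c" "a \<noteq> d" "b \<noteq> c" "b \<noteq> d" "c \<noteq> d" using dist by auto
  have eab: "{a,b} \<in> E" using par(1)[OF bV] ab by (simp add: insert_commute)
  have ecd: "{c,d} \<in> E" using par(1)[OF dV] cd by (simp add: insert_commute)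
  let ?R = "{{a,b},{c,d}}" and ?A = "{{a,c},{b,d}}"
  have RE: "?R \<subseteq> E" using eab ecd by auto
  have Rne: "{a,b} \<noteq> {c,d}" using ne by (auto simp: doubleton_eq_iff)
  have Ane: "{a,c} \<noteq> {b,d}" using ne by (auto simp: doubleton_eq_iff)
  have cR: "card ?R = 2" using Rne by simp
  have cA: "card ?A = 2" using Ane by simp
  have chain: "\<forall>x. (x,b) \<in> P\<^sup>* \<longrightarrow> dist x \<le> dist c \<longrightarrow> (x,b) \<in> (adj_rel E')\<^sup>*"
  proof (intro allI impI)
    fix x assume "(x,b) \<in> P\<^sup>*" "dist x \<le> dist c"
    thus "(x,b) \<in> (adj_rel E')\<^sup>*"
    proof (induction rule: converse_rtrancl_induct)
      case base thus ?case by simp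
    next
      case (step y z)
      note yz = P_step[OF step(1)]
      have "dist z < dist y" using par(2)[of y] yz by auto
      hence IH: "(z,b) \<in> (adj_rel E')\<^sup>*" using step by simp
      have "dist b \<le> dist z" using Pstar[OF step(2)] by simp
      hence "y \<noteq> b" "y \<noteq> d" using \<open>dist z < dist y\<close> step(4) dist by auto
      hence "{y, par y} \<noteq> {b, par b}" "{y, par y} \<noteq> {d, par d}"
        using par_inj yz bV dV by blast+
      hence "{y, z} \<in> E'" using par(1)[of y] yz ab cd unfolding E'_def by (auto simp: insert_commute)
      thus ?case using IH by (meson adj_iff converse_rtrancl_into_rtrancl)
    qed
  qed
  have cbE': "(c,b) \<in> (adj_rel E')\<^sup>*" using chain cb by simp
  have acE': "(a,c) \<in> adj_rel E'" "(b,d) \<in> adj_rel E'" by (auto simp: adj_iff E'_def)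
  have conn': "connected_graph V E'"
  proof (rule connected_transfer[OF cn])
    fix x y assume xy: "{x,y} \<in> E"
    show "(x,y) \<in> (adj_rel E')\<^sup>*"
    proof (cases "{x,y} \<in> ?R")
      case False
      hence "{x,y} \<in> E'" using xy by (simp add: E'_def)
      hence "(x,y) \<in> adj_rel E'" by (simp add: adj_iff)
      thus ?thesis by simp
    next
      case True
      have ab': "(a,b) \<in> (adj_rel E')\<^sup>*" using acE' cbE' by (meson converse_rtrancl_into_rtrancl)
      have cd': "(c,d) \<in> (adj_rel E')\<^sup>*" using acE' cbE' by (meson rtrancl_into_rtrancl)
      from True have "(x,y) \<in> {(a,b),(b,a),(c,d),(d,c)}" by (auto simp: doubleton_eq_iff)
      have ba': "(b,a) \<in> (adj_rel E')\<^sup>*" using adj_rtrancl_sym[OF ab'] .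
      have dc': "(d,c) \<in> (adj_rel E')\<^sup>*" using adj_rtrancl_sym[OF cd'] .
      show ?thesis using \<open>(x,y) \<in> {(a,b),(b,a),(c,d),(d,c)}\<close> ab' ba' cd' dc' by auto
    qed
  qed
  have sg': "simple_graph V E'"
    using sg ab1 cd1 bV dV ne unfolding simple_graph_def E'_def by auto
  have finR: "finite (E - ?R)" using finE by simp
  have cER: "card (E - ?R) = card E - 2" using card_Diff_subset[OF _ RE] cR by simp
  have cE2: "card E \<ge> 2" using card_mono[OF finE RE] cR by simp
  have "card E' \<le> card (E - ?R) + card ?A" unfolding E'_def by (rule card_Un_le)
  hence le: "card E' \<le> card V - 1" using cER cA cE2 cardE by simp
  have Vne: "V \<noteq> {}" using rV by auto
  show tr: "is_tree V E'" by (rule tree_count[OF sg' conn' Vne le])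
  hence "card E' = card E" using cardE by (simp add: is_tree_def)
  hence h1: "card ((E - ?R) \<union> ?A) = card E" unfolding E'_def .
  have h2: "card (E - ?R) + card ?A = card ((E - ?R) \<union> ?A) + card ((E - ?R) \<inter> ?A)"
    using card_Un_Int[OF finR, of ?A] by blast
  have "card ((E - ?R) \<inter> ?A) = 0" using h1 h2 cER cA cE2 by linarith
  hence disj: "(E - ?R) \<inter> ?A = {}" by simp
  have degeq: "deg E' v = deg E v" for v
  proof -
    have s1: "{e\<in>E'. v \<in> e} = {e\<in>E - ?R. v \<in> e} \<union> {e\<in>?A. v \<in> e}" unfolding E'_def by auto
    have s2: "{e\<in>E. v \<in> e} = {e\<in>E - ?R. v \<in> e} \<union> {e\<in>?R. v \<in> e}" using RE by auto
    have c1: "deg E' v = card {e\<in>E - ?R. v \<in> e} + card {e\<in>?A. v \<in> e}"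
      unfolding deg_def s1 by (rule card_Un_disjoint) (use finR disj in auto)
    have c2: "deg E v = card {e\<in>E - ?R. v \<in> e} + card {e\<in>?R. v \<in> e}"
      unfolding deg_def s2 by (rule card_Un_disjoint) (use finR in auto)
    have "card {e\<in>?A. v \<in> e} = card {e\<in>?R. v \<in> e}"
    proof -
      consider "v = a" | "v = b" | "v = c" | "v = d" | "v \<notin> {a,b,c,d}" by auto
      thus ?thesis
      proof cases
        case 1
        hence "{e\<in>?A. v \<in> e} = {{a,c}}" "{e\<in>?R. v \<in> e} = {{a,b}}" using ne by auto
        thus ?thesis by simp
      next
        case 2
        hence "{e\<in>?A. v \<in> e} = {{b,d}}" "{e\<in>?R. v \<in> e} = {{a,b}}" using ne by auto
        thus ?thesis by simp
      next
        case 3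
        hence "{e\<in>?A. v \<in> e} = {{a,c}}" "{e\<in>?R. v \<in> e} = {{c,d}}" using ne by auto
        thus ?thesis by simp
      next
        case 4
        hence "{e\<in>?A. v \<in> e} = {{b,d}}" "{e\<in>?R. v \<in> e} = {{c,d}}" using ne by auto
        thus ?thesis by simp
      next
        case 5
        have e1: "{e\<in>?A. v \<in> e} = {}" using 5 by auto
        have e2: "{e\<in>?R. v \<in> e} = {}" using 5 by auto
        show ?thesis by (simp only: e1 e2)
      qed
    qed
    thus ?thesis using c1 c2 by simp
  qed
  thus "\<forall>v. deg E' v = deg E v" by simp
  let ?f = "\<lambda>e. \<Prod>v\<in>e. deg E v"
  have "M2 E' = sum ?f E'" unfolding M2_def using degeq by simp
  also have "\<dots> = sum ?f (E - ?R) + sum ?f ?A" unfolding E'_def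
    by (rule sum.union_disjoint) (use finR disj in auto)
  also have "sum ?f ?A = deg E a * deg E c + deg E b * deg E d" using Ane ne by simp
  finally have m1: "M2 E' = sum ?f (E - ?R) + (deg E a * deg E c + deg E b * deg E d)" .
  have "M2 E = sum ?f (E - ?R) + sum ?f ?R" unfolding M2_def
    using sum.subset_diff[OF RE finE] by simp
  also have "sum ?f ?R = deg E a * deg E b + deg E c * deg E d" using Rne ne by simp
  finally show "M2 E' + deg E a * deg E b + deg E c * deg E d = M2 E + deg E a * deg E c + deg E b * deg E d"
    using m1 by simp
qed

end



lemma arith44: assumes "x \<le> (3::nat)" "y \<le> 3"
  shows "4 * x + 4 * y < 16 + x * y"
proof -
  have "(1::int) \<le> (4 - int x) * (4 - int y)"
    using assms mult_mono[of 1 "4 - int x" 1 "4 - int y"] by simp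
  hence "int (4 * x + 4 * y) < int (16 + x * y)" by (simp add: algebra_simps)
  thus ?thesis by linarith
qed

context tree begin

lemma part2:
  assumes chem: "\<forall>v\<in>V. deg E v \<le> 4" and r4: "deg E r = 4"
    and max: "\<And>E'. is_tree V E' \<Longrightarrow> (\<forall>v. deg E' v = deg E v) \<Longrightarrow> M2 E' \<le> M2 E"
  shows "\<forall>v\<in>V. v \<noteq> r \<longrightarrow> deg E v = 4 \<longrightarrow> deg E (par v) = 4"
proof (rule ccontr)
  assume "\<not> ?thesis"
  then obtain v where v: "v \<in> V" "v \<noteq> r" "deg E v = 4" "deg E (par v) \<noteq> 4" by blast
  define B where "B = {z. z \<in> V \<and> deg E z \<noteq> 4 \<and> (v,z) \<in> P\<^sup>*}"
  have "par v \<in> B" unfolding B_def using v par[OF v(1,2)] P_I[OF v(1,2)] by auto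
  then obtain b where b: "b \<in> B" "\<And>y. y \<in> B \<Longrightarrow> dist b \<le> dist y"
    using ex_has_least_nat[of "\<lambda>z. z \<in> B" "par v" dist] by blast
  have bV: "b \<in> V" "deg E b \<noteq> 4" "(v,b) \<in> P\<^sup>*" using b(1) by (auto simp: B_def)
  have bnr: "b \<noteq> r" using bV r4 by auto
  define a where "a = par b"
  have aV: "a \<in> V" "Suc (dist a) = dist b" using par[OF bV(1) bnr] a_def by auto
  have va: "(v,a) \<in> P\<^sup>*" using bV(3) P_I[OF bV(1) bnr] a_def by auto
  have a4: "deg E a = 4"
  proof (rule ccontr)
    assume "deg E a \<noteq> 4"
    hence "a \<in> B" using aV va by (auto simp: B_def)
    thus False using b(2) aV by fastforce
  qed
  define C where "C = {z. z \<in> V \<and> deg E z = 4 \<and> (z,b) \<in> P\<^sup>*}"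
  have vC: "v \<in> C" using v bV by (auto simp: C_def)
  have finC: "finite C" using finV by (auto simp: C_def)
  define m where "m = Max (dist ` C)"
  have "m \<in> dist ` C" unfolding m_def using finC vC by (intro Max_in) auto
  then obtain c where c: "c \<in> C" "dist c = m" by blast
  have cmax: "\<And>y. y \<in> C \<Longrightarrow> dist y \<le> dist c" using c finC m_def by simp
  have cV: "c \<in> V" "deg E c = 4" "(c,b) \<in> P\<^sup>*" using c(1) by (auto simp: C_def)
  have cnb: "c \<noteq> b" using cV bV by auto
  have cnr: "c \<noteq> r" using Pstar_neq[OF cV(3) cnb] by simp
  obtain d where d: "d \<in> V" "d \<noteq> r" "par d = c" using child_ex[OF cV(1) cnr] cV by auto
  have "(d,b) \<in> P\<^sup>*" using P_I[OF d(1,2)] d(3) cV(3) by (meson converse_rtrancl_into_rtrancl)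
  moreover have "dist c < dist d" using par(2)[OF d(1,2)] d(3) by simp
  ultimately have d4: "deg E d \<noteq> 4" using cmax[of d] d by (auto simp: C_def)
  define E' where "E' = (E - {{a,b},{c,d}}) \<union> {{a,c},{b,d}}"
  note sw = switch[OF bV(1) bnr a_def[symmetric] d(1,2,3) cV(3) cnb, folded E'_def]
  have "deg E b \<le> 3" "deg E d \<le> 3" using chem bV d d4 by (auto simp: le_Suc_eq)
  hence "4 * deg E b + 4 * deg E d < 16 + deg E b * deg E d" by (rule arith44)
  hence "M2 E < M2 E'" using sw(3) a4 cV(2) by simp
  moreover have "M2 E' \<le> M2 E" using max sw(1,2) by blast
  ultimately show False by simp
qed

lemma induced_tree:
  assumes r4: "deg E r = 4" and cl: "\<forall>v\<in>V. v \<noteq> r \<longrightarrow> deg E v = 4 \<longrightarrow> deg E (par v) = 4"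
  shows "is_tree {v\<in>V. deg E v = 4} (induced_edges E {v\<in>V. deg E v = 4})"
proof -
  let ?S = "{v\<in>V. deg E v = 4}"
  have IE: "induced_edges E ?S = (\<lambda>x. {x, par x}) ` (?S - {r})"
  proof
    show "(\<lambda>x. {x, par x}) ` (?S - {r}) \<subseteq> induced_edges E ?S"
      using par cl unfolding induced_edges_def by auto
    show "induced_edges E ?S \<subseteq> (\<lambda>x. {x, par x}) ` (?S - {r})"
    proof
      fix e assume "e \<in> induced_edges E ?S"
      hence "e \<in> E" "e \<subseteq> ?S" by (auto simp: induced_edges_def)
      have "e \<in> (\<lambda>x. {x, par x}) ` (V - {r})" using E_eq \<open>e \<in> E\<close> by simp
      then obtain x where "x \<in> V" "x \<noteq> r" "e = {x, par x}" by blast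
      thus "e \<in> (\<lambda>x. {x, par x}) ` (?S - {r})" using \<open>e \<subseteq> ?S\<close> by auto
    qed
  qed
  have rS: "r \<in> ?S" using rV r4 by simp
  have finS: "finite ?S" using finV by simp
  have sg': "simple_graph ?S (induced_edges E ?S)"
    using sg finS unfolding simple_graph_def induced_edges_def by auto
  have toR: "x \<in> ?S \<Longrightarrow> (x, r) \<in> (adj_rel (induced_edges E ?S))\<^sup>*" for x
  proof (induction "dist x" arbitrary: x rule: less_induct)
    case less
    show ?case
    proof (cases "x = r")
      case True thus ?thesis by simp
    next
      case False
      have xV: "x \<in> V" using less by simp
      have pS: "par x \<in> ?S" using cl less False par[OF xV False] by auto
      have "(par x, r) \<in> (adj_rel (induced_edges E ?S))\<^sup>*"
        using less(1)[OF _ pS] par(2)[OF xV False] by simp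
      moreover have "(x, par x) \<in> adj_rel (induced_edges E ?S)"
        using IE less(2) False by (auto simp: adj_iff)
      ultimately show ?thesis by (meson converse_rtrancl_into_rtrancl)
    qed
  qed
  have conn': "connected_graph ?S (induced_edges E ?S)"
    unfolding connected_graph_def using toR adj_rtrancl_sym by (meson rtrancl_trans)
  have "card (induced_edges E ?S) = card (?S - {r})"
    unfolding IE by (rule card_image) (use inj_paredge in \<open>auto simp: inj_on_def\<close>)
  hence "card (induced_edges E ?S) = card ?S - 1" using rS finS by simp
  thus ?thesis using sg' conn' rS unfolding is_tree_def by auto
qed

end



lemma edge_at:
  assumes "simple_graph V E" "e \<in> E" "u \<in> e"
  obtains x where "e = {u,x}" "x \<noteq> u" "x \<in> V"
proof -
  obtain p q where "e = {p,q}" "p \<noteq> q" "p \<in> V" "q \<in> V" using edge_of[OF assms(1,2)] by blast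
  thus ?thesis using that assms(3) by (auto simp: insert_commute)
qed

lemma deg_pos: "simple_graph V E \<Longrightarrow> {x,y} \<in> E \<Longrightarrow> deg E x \<ge> 1"
proof -
  assume a: "simple_graph V E" "{x,y} \<in> E"
  have "{e\<in>E. x \<in> e} \<noteq> {}" using a by auto
  moreover have "finite {e\<in>E. x \<in> e}" using finite_E[OF a(1)] by simp
  ultimately show ?thesis unfolding deg_def by (simp add: Suc_le_eq card_gt_0_iff)
qed

lemma handshake:
  assumes "simple_graph V E"
  shows "(\<Sum>v\<in>V. deg E v) = 2 * card E"
proof -
  have fE: "finite E" using finite_E[OF assms] .
  have fV: "finite V" using assms by (simp add: simple_graph_def)
  have "(\<Sum>v\<in>V. deg E v) = (\<Sum>v\<in>V. \<Sum>e\<in>E. if v \<in> e then 1 else (0::nat))"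
    unfolding deg_def using fE by (simp add: sum.inter_filter[symmetric])
  also have "\<dots> = (\<Sum>e\<in>E. \<Sum>v\<in>V. if v \<in> e then 1 else (0::nat))" by (rule sum.swap)
  also have "\<dots> = (\<Sum>e\<in>E. (2::nat))"
  proof (rule sum.cong[OF refl])
    fix e assume "e \<in> E"
    hence "e \<subseteq> V" "card e = 2" using assms by (auto simp: simple_graph_def)
    hence "{v\<in>V. v \<in> e} = e" by auto
    hence "(\<Sum>v\<in>V. if v \<in> e then 1 else (0::nat)) = card e"
      using fV by (simp add: sum.inter_filter[symmetric])
    thus "(\<Sum>v\<in>V. if v \<in> e then 1 else (0::nat)) = 2" using \<open>card e = 2\<close> by simp
  qed
  finally show ?thesis by simp
qed

lemma crossing:
  assumes "connected_graph V E" "x0 \<in> X" "x0 \<in> V" "y0 \<in> V" "y0 \<notin> X"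
  shows "\<exists>x y. x \<in> X \<and> y \<notin> X \<and> {x,y} \<in> E"
proof -
  have "(x0,y0) \<in> (adj_rel E)\<^sup>*" using assms by (auto simp: connected_graph_def)
  hence "y0 \<in> X \<or> (\<exists>x y. x \<in> X \<and> y \<notin> X \<and> {x,y} \<in> E)"
  proof (induction rule: rtrancl_induct)
    case base thus ?case using assms by simp
  next
    case (step y z) thus ?case by (auto simp: adj_iff)
  qed
  thus ?thesis using assms by blast
qed




lemma T1:
  assumes tr: "is_tree V E" and uw: "{u,w} \<in> E" and dw: "deg E w = 2" and du: "deg E u = 3"
  shows "\<exists>E'. is_tree V E' \<and> deg E' u = 4 \<and> deg E' w = 1
           \<and> (\<forall>v. v \<noteq> u \<longrightarrow> v \<noteq> w \<longrightarrow> deg E' v = deg E v) \<and> M2 E < M2 E'"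
proof -
  have sg: "simple_graph V E" and cn: "connected_graph V E" and cardE: "card E = card V - 1"
    and Vne: "V \<noteq> {}" using tr by (auto simp: is_tree_def)
  have fE: "finite E" using finite_E[OF sg] .
  have uV: "u \<in> V" and wV: "w \<in> V" using edge_in_V[OF sg uw] by auto
  have unw: "u \<noteq> w" using edge_neq[OF sg uw] .
  let ?Nw = "{e\<in>E. w \<in> e}" and ?Nu = "{e\<in>E. u \<in> e}"
  have uwNw: "{u,w} \<in> ?Nw" and uwNu: "{u,w} \<in> ?Nu" using uw by auto
  have "card (?Nw - {{u,w}}) = 1" using dw uwNw unfolding deg_def by (simp add: card_Diff_singleton)
  then obtain e3 where e3: "?Nw - {{u,w}} = {e3}" by (auto simp: card_1_singleton_iff)
  hence e3E: "e3 \<in> E" "w \<in> e3" "e3 \<noteq> {u,w}" by auto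
  then obtain t where t: "e3 = {w,t}" "t \<noteq> w" "t \<in> V" using edge_at[OF sg] by metis
  have tnu: "t \<noteq> u" using t e3E(3) by (auto simp: insert_commute)
  have Nw: "?Nw = {{u,w},{w,t}}" using e3 uwNw t(1) by blast
  have wt: "{w,t} \<in> E" using e3E t by simp
  have "card (?Nu - {{u,w}}) = 2" using du uwNu unfolding deg_def by (simp add: card_Diff_singleton)
  then obtain e1 e2 where e12: "?Nu - {{u,w}} = {e1,e2}" "e1 \<noteq> e2" by (auto simp: card_2_iff)
  hence e1E: "e1 \<in> E" "u \<in> e1" "e1 \<noteq> {u,w}" and e2E: "e2 \<in> E" "u \<in> e2" "e2 \<noteq> {u,w}" by auto
  obtain a where a: "e1 = {u,a}" "a \<noteq> u" "a \<in> V" using edge_at[OF sg e1E(1,2)] by metis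
  obtain c where c: "e2 = {u,c}" "c \<noteq> u" "c \<in> V" using edge_at[OF sg e2E(1,2)] by metis
  have anw: "a \<noteq> w" using e1E(3) a(1) by auto
  have cnw: "c \<noteq> w" using e2E(3) c(1) by auto
  have anc: "a \<noteq> c" using e12(2) a c by auto
  have Nu: "?Nu = {{u,w},{u,a},{u,c}}" using e12(1) uwNu a(1) c(1) by blast
  have uaE: "{u,a} \<in> E" and ucE: "{u,c} \<in> E" using e1E e2E a c by auto
  define E' where "E' = (E - {{w,t}}) \<union> {{u,t}}"
  have uwt: "{u,w} \<noteq> {w,t}" using tnu unw by (auto simp: doubleton_eq_iff)
  have sg': "simple_graph V E'" using sg uV t tnu unfolding simple_graph_def E'_def by auto
  have conn': "connected_graph V E'"
  proof (rule connected_transfer[OF cn])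
    fix x y assume xy: "{x,y} \<in> E"
    show "(x,y) \<in> (adj_rel E')\<^sup>*"
    proof (cases "{x,y} = {w,t}")
      case False
      hence "(x,y) \<in> adj_rel E'" using xy by (simp add: E'_def adj_iff)
      thus ?thesis by simp
    next
      case True
      have "(w,u) \<in> adj_rel E'" using uw uwt by (simp add: E'_def adj_iff insert_commute)
      moreover have "(u,t) \<in> adj_rel E'" by (simp add: E'_def adj_iff)
      ultimately have wt': "(w,t) \<in> (adj_rel E')\<^sup>*" by (meson converse_rtrancl_into_rtrancl r_into_rtrancl)
      have tw': "(t,w) \<in> (adj_rel E')\<^sup>*" using adj_rtrancl_sym[OF wt'] .
      from True have "(x = w \<and> y = t) \<or> (x = t \<and> y = w)" by (auto simp: doubleton_eq_iff)
      thus ?thesis using wt' tw' by auto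
    qed
  qed
  have cE1: "card (E - {{w,t}}) = card E - 1" using wt fE by simp
  have cE0: "card E \<ge> 1" using wt fE by (metis One_nat_def Suc_leI card_gt_0_iff empty_iff)
  have "card E' \<le> card (E - {{w,t}}) + card {{u,t}}" unfolding E'_def by (rule card_Un_le)
  hence le: "card E' \<le> card V - 1" using cE1 cE0 cardE by simp
  have tr': "is_tree V E'" by (rule tree_count[OF sg' conn' Vne le])
  hence cE': "card E' = card E" using cardE by (simp add: is_tree_def)
  have utE: "{u,t} \<notin> E"
  proof
    assume "{u,t} \<in> E"
    moreover have "{u,t} \<noteq> {w,t}" using unw tnu by (auto simp: doubleton_eq_iff)
    ultimately have "E' = E - {{w,t}}" unfolding E'_def by auto
    thus False using cE' cE1 cE0 by simp
  qed
  have tna: "t \<noteq> a" and tnc: "t \<noteq> c" using utE uaE ucE by auto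
  have Nu': "{e\<in>E'. u \<in> e} = insert {u,t} ?Nu" using unw tnu unfolding E'_def by auto
  have du': "deg E' u = 4" unfolding deg_def Nu' using utE du fE by (simp add: deg_def)
  have Nw': "{e\<in>E'. w \<in> e} = {{u,w}}" using Nw unw t(2) uwt unfolding E'_def by auto
  have dw': "deg E' w = 1" unfolding deg_def Nw' by simp
  have dother: "deg E' v = deg E v" if "v \<noteq> u" "v \<noteq> w" for v
  proof (cases "v = t")
    case True
    have s: "{e\<in>E'. t \<in> e} = insert {u,t} ({e\<in>E. t \<in> e} - {{w,t}})" unfolding E'_def by auto
    have "card ({e\<in>E. t \<in> e} - {{w,t}}) = deg E t - 1" unfolding deg_def using wt
      by (simp add: card_Diff_singleton)
    moreover have "deg E t \<ge> 1" using deg_pos[OF sg, of t w] wt by (simp add: insert_commute)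
    ultimately have "card (insert {u,t} ({e\<in>E. t \<in> e} - {{w,t}})) = deg E t"
      using utE fE by simp
    thus ?thesis unfolding True deg_def s[symmetric] by (simp add: deg_def)
  next
    case False
    have "{e\<in>E'. v \<in> e} = {e\<in>E. v \<in> e}" using that False unfolding E'_def by auto
    thus ?thesis by (simp add: deg_def)
  qed
  let ?K = "{{u,w},{u,a},{u,c},{w,t}}" and ?K' = "{{u,w},{u,a},{u,c},{u,t}}"
  have KE: "?K \<subseteq> E" using uw uaE ucE wt by auto
  have KE': "?K' \<subseteq> E'" using uw uaE ucE uwt unw tnu tna tnc anw cnw unfolding E'_def
    by (auto simp: doubleton_eq_iff)
  have fE': "finite E'" using finite_E[OF sg'] .
  have diffeq: "E' - ?K' = E - ?K" using utE unfolding E'_def by auto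
  have far: "u \<notin> e \<and> w \<notin> e" if eK: "e \<in> E - ?K" for e
  proof (intro conjI notI)
    assume "u \<in> e"
    hence "e \<in> ?Nu" using eK by simp
    hence "e \<in> {{u,w},{u,a},{u,c}}" using Nu by simp
    thus False using eK by auto
  next
    assume "w \<in> e"
    hence "e \<in> ?Nw" using eK by simp
    hence "e \<in> {{u,w},{w,t}}" using Nw by simp
    thus False using eK by auto
  qed
  let ?f = "\<lambda>e. \<Prod>v\<in>e. deg E v" and ?f' = "\<lambda>e. \<Prod>v\<in>e. deg E' v"
  have feq: "?f' e = ?f e" if eK: "e \<in> E - ?K" for e
  proof (rule prod.cong[OF refl])
    fix v assume "v \<in> e"
    hence "v \<noteq> u" "v \<noteq> w" using far[OF eK] by auto
    thus "deg E' v = deg E v" by (rule dother)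
  qed
  define S where "S = sum ?f (E - ?K)"
  have mE: "M2 E = S + sum ?f ?K" unfolding M2_def S_def using sum.subset_diff[OF KE fE] by simp
  have mE': "M2 E' = sum ?f' (E' - ?K') + sum ?f' ?K'" unfolding M2_def using sum.subset_diff[OF KE' fE'] by simp
  have sS: "sum ?f' (E' - ?K') = S" unfolding diffeq S_def using feq by (rule sum.cong[OF refl])
  have sK: "sum ?f ?K = 3 * 2 + 3 * deg E a + 3 * deg E c + 2 * deg E t"
    using unw anw cnw anc tnu tna tnc t(2) a(2) c(2) du dw by (simp add: doubleton_eq_iff)
  have sK': "sum ?f' ?K' = 4 * 1 + 4 * deg E a + 4 * deg E c + 4 * deg E t"
    using unw anw cnw anc tnu tna tnc t(2) a(2) c(2) du' dw' dother by (simp add: doubleton_eq_iff)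
  have da: "deg E a \<ge> 1" using deg_pos[OF sg, of a u] uaE by (simp add: insert_commute)
  have dc: "deg E c \<ge> 1" using deg_pos[OF sg, of c u] ucE by (simp add: insert_commute)
  have h1: "M2 E = S + (3 * 2 + 3 * deg E a + 3 * deg E c + 2 * deg E t)" using mE sK by simp
  have h2: "M2 E' = S + (4 * 1 + 4 * deg E a + 4 * deg E c + 4 * deg E t)" using mE' sK' sS by simp
  have dt: "deg E t \<ge> 1" using deg_pos[OF sg, of t w] wt by (simp add: insert_commute)
  have "M2 E < M2 E'" unfolding h1 h2 using da dc dt by simp
  thus ?thesis using tr' du' dw' dother by blast
qed




theorem lemma14:
  fixes n b :: nat and V :: "'a set" and E :: "'a set set"
  assumes "1 \<le> b" and "real b < real n / 2 - 1"
    and "(V, E) \<in> CT_star n b"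
    and "\<forall>(V' :: 'a set, E') \<in> CT_star n b. M2 E' \<le> M2 E"
  shows "(\<exists>v\<in>V. deg E v = 4)
       \<and> is_tree {v\<in>V. deg E v = 4} (induced_edges E {v\<in>V. deg E v = 4})"
proof -
  have ct: "chemical_tree V E" and cV: "card V = n" and cB: "card (branching_vertices V E) = b"
    using assms(3) by (auto simp: CT_star_def)
  have tr: "is_tree V E" and chem: "\<forall>v\<in>V. deg E v \<le> 4" using ct by (auto simp: chemical_tree_def)
  have sg: "simple_graph V E" and cn: "connected_graph V E" and cardE: "card E = card V - 1"
    using tr by (auto simp: is_tree_def)
  have fV: "finite V" using sg by (simp add: simple_graph_def)
  have max': "M2 E' \<le> M2 E" if "is_tree V E'" "\<forall>v\<in>V. deg E' v \<le> 4"
    "branching_vertices V E' = branching_vertices V E" for E'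
  proof -
    have "(V, E') \<in> CT_star n b" using that cV cB by (auto simp: CT_star_def chemical_tree_def)
    thus ?thesis using assms(4) by blast
  qed
  have nb: "2 * b + 2 < n" using assms(2) by linarith
  let ?Br = "branching_vertices V E"
  have BrV: "?Br \<subseteq> V" by (auto simp: branching_vertices_def)
  have ex4: "\<exists>v\<in>V. deg E v = 4"
  proof (rule ccontr)
    assume no4: "\<not> ?thesis"
    have le3: "deg E v \<le> 3" if "v \<in> V" for v using no4 chem that by force
    have ex2: "\<exists>w\<in>V. deg E w = 2"
    proof (rule ccontr)
      assume no2: "\<not> ?thesis"
      have "(\<Sum>v\<in>V. deg E v) \<le> (\<Sum>v\<in>V. if v \<in> ?Br then 3 else 1)"
      proof (rule sum_mono)
        fix v assume vV: "v \<in> V"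
        show "deg E v \<le> (if v \<in> ?Br then 3 else 1)"
          using le3[OF vV] no2 vV by (auto simp: branching_vertices_def)
      qed
      also have "\<dots> = 3 * card ?Br + card (V - ?Br)"
        using fV BrV by (simp add: sum.If_cases Int_absorb1 Diff_eq)
      also have "card (V - ?Br) = n - b" using card_Diff_subset[OF finite_subset[OF BrV fV] BrV] cV cB by simp
      finally have "2 * card E \<le> 3 * b + (n - b)" using handshake[OF sg] cB by simp
      thus False using cardE cV nb by simp
    qed
    then obtain w where wV: "w \<in> V" "deg E w = 2" by blast
    have "?Br \<noteq> {}" using cB assms(1) by auto
    then obtain u where uB: "u \<in> ?Br" by blast
    hence uV: "u \<in> V" and "deg E u > 2" by (auto simp: branching_vertices_def)
    hence du: "deg E u = 3" using le3[OF uV] by simp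
    define X where "X = {v\<in>V. deg E v = 2} \<union> {v\<in>V. deg E v \<le> 1 \<and> (\<exists>y. {v,y} \<in> E \<and> deg E y = 2)}"
    have "w \<in> X" using wV by (simp add: X_def)
    moreover have "u \<notin> X" using du by (simp add: X_def)
    ultimately obtain x y where xy: "x \<in> X" "y \<notin> X" "{x,y} \<in> E"
      using crossing[OF cn _ wV(1) uV] by blast
    have xV: "x \<in> V" and yV: "y \<in> V" using edge_in_V[OF sg xy(3)] by auto
    have xny: "x \<noteq> y" using edge_neq[OF sg xy(3)] .
    show False
    proof (cases "deg E x = 2")
      case True
      have "deg E y \<noteq> 2" using xy yV by (simp add: X_def)
      moreover have "\<not> deg E y \<le> 1" using xy yV True by (auto simp: X_def insert_commute)
      ultimately have dy: "deg E y = 3" using le3[OF yV] by simp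
      have yx: "{y,x} \<in> E" using xy by (simp add: insert_commute)
      obtain E' where E': "is_tree V E'" "deg E' y = 4" "deg E' x = 1"
          "\<forall>v. v \<noteq> y \<longrightarrow> v \<noteq> x \<longrightarrow> deg E' v = deg E v" "M2 E < M2 E'"
        using T1[OF tr yx True dy] by blast
      have dE': "deg E' v = (if v = y then 4 else if v = x then 1 else deg E v)" for v
        using E'(2,3,4) by (cases "v = y"; cases "v = x") auto
      have "\<forall>v\<in>V. deg E' v \<le> 4" using chem by (simp add: dE')
      moreover have "branching_vertices V E' = branching_vertices V E"
        using dy True unfolding branching_vertices_def by (auto simp: dE')
      ultimately have "M2 E' \<le> M2 E" using max' E'(1) by blast
      thus False using E'(5) by simp
    next
      case False
      then obtain z where z: "deg E x \<le> 1" "{x,z} \<in> E" "deg E z = 2" using xy by (auto simp: X_def)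
      have fin: "finite {e\<in>E. x \<in> e}" using finite_E[OF sg] by simp
      have "card {e\<in>E. x \<in> e} \<le> Suc 0" using z(1) by (simp add: deg_def)
      moreover have "{x,y} \<in> {e\<in>E. x \<in> e}" "{x,z} \<in> {e\<in>E. x \<in> e}" using xy(3) z(2) by auto
      ultimately have "{x,y} = {x,z}" using card_le_Suc0_iff_eq[OF fin] by metis
      hence "y = z" using xny by (auto simp: doubleton_eq_iff)
      hence "y \<in> X" using yV z by (simp add: X_def)
      thus False using xy by simp
    qed
  qed
  then obtain r where rV: "r \<in> V" and r4: "deg E r = 4" by blast
  interpret T: tree V E r
    by unfold_locales (use sg cn rV cardE in auto)
  have max2: "M2 E' \<le> M2 E" if "is_tree V E'" "\<forall>v. deg E' v = deg E v" for E'
    using max'[OF that(1)] that(2) chem unfolding branching_vertices_def by simp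
  have cl: "\<forall>v\<in>V. v \<noteq> r \<longrightarrow> deg E v = 4 \<longrightarrow> deg E (T.par v) = 4"
    by (rule T.part2[OF chem r4 max2])
  show ?thesis using ex4 T.induced_tree[OF r4 cl] by blast
qed


end
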